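(* Let $m\ge0$ and let $\chi_t^{(-1/2,-1/2,m)}$ be the averaged characteristic polynomial of the Jacobi eigenvalue process with $p=q=m-\tfrac12$ (so $r=s=-\tfrac12$) started from $(1,\dots,1)$, so that $\chi_0^{(-1/2,-1/2,m)}(x)=(x-1)^m$. Then for all $t\ge0$ and all $z\in\mathbb C\setminus\{0\}$, $$H_{2m}(z,2t)=4^mz^m\,\chi_t^{(-1/2,-1/2,m)}\Big(\frac{z+z^{-1}+2}{4}\Big),$$ where $H_d(z,t)=\sum_{k=0}^dz^{d-k}(-1)^k\binom dk\exp\big(-t\frac{k(d-k)}2\big)$ is the Hermite unitary polynomial.
   Context: The Jacobi eigenvalue process with parameters $p,q$ solves $d\lambda_t^i=\sqrt{2\lambda_t^i(1-\lambda_t^i)}dB_t^i+[p-(p+q)\lambda_t^i+\sum_{j\ne i}\frac{\lambda_t^i(1-\lambda_t^j)+\lambda_t^j(1-\lambda_t^i)}{\lambda_t^i-\lambda_t^j}]dt$, $1\le i\le m$, with independent Brownian motions, and $\chi_t^{(r,s,m)}(x)=\mathbb E\prod_{i=1}^m(x-\lambda_t^i)$ with $r=p-m$, $s=q-m$. Equivalently, $\chi_t^{(r,s,m)}$ is the solution of $\partial_t\chi=-\{x(1-x)\partial_x^2+[(r+1)-(r+s+2)x]\partial_x+m(r+s+m+1)\}\chi$ with the given initial polynomial. *)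

theory Defs
  imports "HOL-Analysis.Analysis" "HOL-Computational_Algebra.Polynomial"
begin

definition hermite_unitary :: "nat \<Rightarrow> complex \<Rightarrow> real \<Rightarrow> complex" where
  "hermite_unitary d z t =
     (\<Sum>k=0..d. z ^ (d - k) * (-1) ^ k * of_nat (d choose k)
                * complex_of_real (exp (- t * real (k * (d - k)) / 2)))"

definition jacobi_op :: "real \<Rightarrow> real \<Rightarrow> nat \<Rightarrow> real poly \<Rightarrow> real \<Rightarrow> real" where
  "jacobi_op r s m p x =
     x * (1 - x) * poly (pderiv (pderiv p)) x
     + ((r + 1) - (r + s + 2) * x) * poly (pderiv p) x
     + real m * (r + s + real m + 1) * poly p x"

text \<open>chi is the averaged characteristic polynomial chi^{(r,s,m)}_t with initial polynomial p0:
  the (polynomial, degree <= m) solution for t >= 0 of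
  d/dt chi_t = - L chi_t, chi_0 = p0.\<close>
definition is_jacobi_char_poly ::
  "real \<Rightarrow> real \<Rightarrow> nat \<Rightarrow> real poly \<Rightarrow> (real \<Rightarrow> real poly) \<Rightarrow> bool" where
  "is_jacobi_char_poly r s m p0 chi \<longleftrightarrow>
     chi 0 = p0 \<and>
     (\<forall>t\<ge>0. degree (chi t) \<le> m) \<and>
     (\<forall>t\<ge>0. \<forall>x. ((\<lambda>\<tau>. poly (chi \<tau>) x) has_real_derivative
                      - jacobi_op r s m (chi t) x) (at t within {0..}))"

end

theory Submission
  imports Defs
begin

definition lag :: "nat \<Rightarrow> nat \<Rightarrow> real poly" where
  "lag n j = smult (inverse (\<Prod>i\<in>{0..n}-{j}. real j - real i)) (\<Prod>i\<in>{0..n}-{j}. [:-(real i+1), 1:])"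

lemma poly_lag:
  assumes "k \<le> n" "j \<le> n"
  shows "poly (lag n j) (real k + 1) = (if k = j then 1 else 0)"
proof (cases "k = j")
  case True
  have "(\<Prod>i\<in>{0..n}-{j}. real j - real i) \<noteq> 0" by (simp add: prod_zero_iff)
  then show ?thesis using True by (simp add: lag_def poly_prod)
next
  case False
  then have "(\<Prod>i\<in>{0..n}-{j}. poly [:-(real i+1), 1:] (real k + 1)) = 0"
    using assms by (subst prod_zero_iff) auto
  then show ?thesis using False by (simp add: lag_def poly_prod)
qed

lemma degree_lag: "degree (lag n j) \<le> n" if "j \<le> n"
proof -
  have "degree (\<Prod>i\<in>{0..n}-{j}. [:-(real i+1), 1:]) \<le> (\<Sum>i\<in>{0..n}-{j}. degree [:-(real i+1), 1:])"
    by (rule order.trans[OF degree_prod_sum_le]) auto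
  also have "\<dots> \<le> n" using that by (auto simp: card_Diff_singleton)
  finally show ?thesis unfolding lag_def by (rule order.trans[OF degree_smult_le])
qed

lemma interp:
  assumes "degree P \<le> n"
  shows "P = (\<Sum>j\<in>{0..n}. smult (poly P (real j + 1)) (lag n j))"
proof (rule poly_eqI_degree[where A = "(\<lambda>j. real j + 1) ` {0..n}"])
  have cA: "card ((\<lambda>j. real j + 1) ` {0..n}) = Suc n"
    by (subst card_image) (auto simp: inj_on_def)
  show "degree P < card ((\<lambda>j. real j + 1) ` {0..n})" using assms cA by simp
  have "degree (\<Sum>j\<in>{0..n}. smult (poly P (real j + 1)) (lag n j)) \<le> n"
    by (intro degree_sum_le order.trans[OF degree_smult_le] degree_lag) auto
  then show "degree (\<Sum>j\<in>{0..n}. smult (poly P (real j + 1)) (lag n j)) < card ((\<lambda>j. real j + 1) ` {0..n})"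
    using cA by simp
  fix x assume "x \<in> (\<lambda>j. real j + 1) ` {0..n}"
  then obtain k where k: "k \<le> n" "x = real k + 1" by auto
  have "(\<Sum>j\<in>{0..n}. poly P (real j + 1) * poly (lag n j) (real k + 1)) = 
        (\<Sum>j\<in>{0..n}. if j = k then poly P (real k + 1) else 0)"
    by (intro sum.cong refl) (use k in \<open>auto simp: poly_lag\<close>)
  also have "\<dots> = poly P (real k + 1)" using k by simp
  finally show "poly P x = poly (\<Sum>j\<in>{0..n}. smult (poly P (real j + 1)) (lag n j)) x"
    using k by (simp add: poly_sum)
qed

lemma coeff_interp:
  assumes "degree P \<le> n"
  shows "coeff P a = (\<Sum>j\<in>{0..n}. poly P (real j + 1) * coeff (lag n j) a)"
  by (subst interp[OF assms]) (simp add: coeff_sum)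

definition Mop :: "nat \<Rightarrow> real poly \<Rightarrow> real poly" where
  "Mop m P = smult (2 * real m - 1) (pCons 0 (pderiv P)) - pCons 0 (pCons 0 (pderiv (pderiv P)))"

lemma coeff_Mop: "coeff (Mop m P) a = real a * (2 * real m - real a) * coeff P a"
proof (cases a)
  case 0 then show ?thesis by (simp add: Mop_def)
next
  case (Suc b) then show ?thesis
    by (cases b) (auto simp: Mop_def coeff_pderiv coeff_pCons algebra_simps)
qed

lemma degree_Mop: "degree (Mop m P) \<le> degree P"
  by (rule degree_le) (simp add: coeff_Mop coeff_eq_0)

lemma poly_Mop: "poly (Mop m P) z = (2 * real m - 1) * z * poly (pderiv P) z - z^2 * poly (pderiv (pderiv P)) z"
  by (simp add: Mop_def power2_eq_square algebra_simps)

definition Q :: "nat \<Rightarrow> real poly \<Rightarrow> real poly" where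
  "Q m p = (\<Sum>k\<le>m. smult (coeff p k * 4^(m-k)) ([:0,1:]^(m-k) * [:1,1:]^(2*k)))"

definition ww :: "'a::field \<Rightarrow> 'a" where "ww z = (z + inverse z + 2) / 4"


lemma mpr_add: "map_poly (of_real :: real \<Rightarrow> 'a::real_field) (p + q) = map_poly of_real p + map_poly of_real q"
  by (rule poly_eqI) (simp add: coeff_map_poly)

lemma mpr_mult: "map_poly (of_real :: real \<Rightarrow> 'a::real_field) (p * q) = map_poly of_real p * map_poly of_real q"
  by (rule poly_eqI) (simp add: coeff_map_poly coeff_mult of_real_sum)

lemma mpr_sum: "map_poly (of_real :: real \<Rightarrow> 'a::real_field) (\<Sum>k\<in>A. f k) = (\<Sum>k\<in>A. map_poly of_real (f k))"
  by (induction A rule: infinite_finite_induct) (auto simp: mpr_add)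

lemma mpr_power: "map_poly (of_real :: real \<Rightarrow> 'a::real_field) (p ^ n) = (map_poly of_real p) ^ n"
  by (induction n) (auto simp: mpr_mult)

lemma mpr_smult: "map_poly (of_real :: real \<Rightarrow> 'a::real_field) (smult c p) = smult (of_real c) (map_poly of_real p)"
  by (rule map_poly_smult) auto

lemma poly_sum_deg:
  fixes p :: "'a::comm_semiring_1 poly"
  assumes "degree p \<le> n"
  shows "poly p x = (\<Sum>i\<le>n. coeff p i * x ^ i)"
proof -
  have "poly p x = poly (\<Sum>i\<le>n. monom (coeff p i) i) x" using poly_as_sum_of_monoms'[OF assms] by simp
  also have "\<dots> = (\<Sum>i\<le>n. coeff p i * x ^ i)" by (simp add: poly_sum poly_monom)
  finally show ?thesis .
qed

lemma poly_mpr_sum: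
  assumes "degree p \<le> n"
  shows "poly (map_poly (of_real :: real \<Rightarrow> 'a::real_field) p) x = (\<Sum>i\<le>n. of_real (coeff p i) * x ^ i)"
  using poly_sum_deg[OF order.trans[OF map_poly_degree_leq assms], of "of_real :: real \<Rightarrow> 'a" x]
  by (simp add: coeff_map_poly)

lemma term_eq:
  fixes z :: "'a::real_field"
  assumes "z \<noteq> 0" "k \<le> m"
  shows "4^m * z^m * (ww z)^k = 4^(m-k) * z^(m-k) * (z+1)^(2*k)"
proof -
  have "4 * z * ww z = (z+1)^2" using assms(1)
    by (simp add: ww_def field_simps power2_eq_square)
  obtain j where j: "m = k + j" using assms(2) le_Suc_ex by blast
  have "(4::'a)^m * z^m * (ww z)^k = 4^(m-k) * z^(m-k) * (4 * z * ww z)^k"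
    unfolding j by (simp add: power_mult_distrib power_add mult_ac)
  also have "\<dots> = 4^(m-k) * z^(m-k) * (z+1)^(2*k)"
    using \<open>4 * z * ww z = (z+1)^2\<close> by (simp add: power_mult)
  finally show ?thesis .
qed

lemma poly_Q_gen:
  fixes z :: "'a::real_field"
  assumes "degree p \<le> m" "z \<noteq> 0"
  shows "poly (map_poly of_real (Q m p)) z = 4^m * z^m * poly (map_poly of_real p) (ww z)"
proof -
  have "poly (map_poly of_real (Q m p)) z = (\<Sum>k\<le>m. of_real (coeff p k) * (4^(m-k) * z^(m-k) * (z+1)^(2*k)))"
    by (simp add: Q_def mpr_sum mpr_smult mpr_mult mpr_power poly_sum map_poly_pCons mult_ac add.commute)
  also have "\<dots> = (\<Sum>k\<le>m. of_real (coeff p k) * (4^m * z^m * (ww z)^k))"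
    by (intro sum.cong refl) (simp add: term_eq assms)
  also have "\<dots> = 4^m * z^m * poly (map_poly of_real p) (ww z)"
    by (simp add: poly_mpr_sum[OF assms(1)] sum_distrib_left mult_ac)
  finally show ?thesis .
qed

lemma poly_Q_real:
  assumes "degree p \<le> m" "(z::real) \<noteq> 0"
  shows "poly (Q m p) z = 4^m * z^m * poly p (ww z)"
  using poly_Q_gen[OF assms] by simp

lemma degree_Q: "degree (Q m p) \<le> 2 * m"
  unfolding Q_def
proof (intro degree_sum_le order.trans[OF degree_smult_le])
  fix k assume "k \<in> {..m}"
  have "degree ([:0,1::real:]^(m-k) * [:1,1:]^(2*k)) \<le> (m-k) + 2*k"
    by (intro order.trans[OF degree_mult_le] add_mono order.trans[OF degree_power_le]) auto
  then show "degree ([:0,1::real:]^(m-k) * [:1,1:]^(2*k)) \<le> 2 * m" using \<open>k \<in> {..m}\<close> by auto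
qed simp


definition w1 :: "real \<Rightarrow> real" where "w1 z = (1 - inverse z * inverse z) / 4"

lemma DERIV_ww: "(z::real) \<noteq> 0 \<Longrightarrow> (ww has_real_derivative w1 z) (at z)"
  unfolding ww_def[abs_def]
  apply (rule DERIV_cong)
   apply (rule DERIV_cdivide DERIV_add DERIV_ident DERIV_inverse DERIV_const | assumption)+
  apply (simp add: w1_def power2_eq_square)
  done

lemma DERIV_w1: "(z::real) \<noteq> 0 \<Longrightarrow> (w1 has_real_derivative inverse z ^ 3 / 2) (at z)"
  unfolding w1_def[abs_def]
  apply (rule DERIV_cong)
   apply (rule DERIV_cdivide DERIV_diff DERIV_mult' DERIV_inverse DERIV_const | assumption)+
  apply (simp add: power3_eq_cube)
  done

lemma DERIV_poly_ww:
  assumes "(z::real) \<noteq> 0"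
  shows "((\<lambda>z. poly q (ww z)) has_real_derivative poly (pderiv q) (ww z) * w1 z) (at z)"
  by (rule DERIV_chain2[OF poly_DERIV DERIV_ww[OF assms]])

lemma DERIV_zpow: "(z::real) \<noteq> 0 \<Longrightarrow> ((\<lambda>z. z^m) has_real_derivative real m * (z^m * inverse z)) (at z)"
  using DERIV_pow[of m z UNIV] by (cases m) (auto simp: field_simps)

definition F1 :: "nat \<Rightarrow> real poly \<Rightarrow> real \<Rightarrow> real" where
  "F1 m p z = 4^m * (real m * (z^m * inverse z) * poly p (ww z) + z^m * (poly (pderiv p) (ww z) * w1 z))"

definition F2 :: "nat \<Rightarrow> real poly \<Rightarrow> real \<Rightarrow> real" where
  "F2 m p z = 4^m * (real m * (real m - 1) * (z^m * inverse z^2) * poly p (ww z)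
     + 2 * real m * (z^m * inverse z) * poly (pderiv p) (ww z) * w1 z
     + z^m * poly (pderiv (pderiv p)) (ww z) * (w1 z)^2
     + z^m * poly (pderiv p) (ww z) * (inverse z ^ 3 / 2))"

lemma DERIV_F0:
  assumes "(z::real) \<noteq> 0"
  shows "((\<lambda>z. 4^m * (z^m * poly p (ww z))) has_real_derivative F1 m p z) (at z)"
  apply (rule DERIV_cong)
   apply (rule DERIV_cmult DERIV_mult' DERIV_zpow DERIV_poly_ww assms)+
  apply (simp add: F1_def algebra_simps)
  done

lemma DERIV_F1:
  assumes "(z::real) \<noteq> 0"
  shows "(F1 m p has_real_derivative F2 m p z) (at z)"
  unfolding F1_def[abs_def]
  apply (rule DERIV_cong)
   apply (rule DERIV_cmult DERIV_add DERIV_mult' DERIV_zpow DERIV_poly_ww DERIV_w1 DERIV_inverse DERIV_const assms)+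
  using assms apply (simp add: F2_def field_simps power2_eq_square power3_eq_cube)
  done


lemma key_alg:
  assumes "(z::real) \<noteq> 0"
  shows "(2 * real m - 1) * z * F1 m p z - z^2 * F2 m p z = 4^m * z^m * jacobi_op (-1/2) (-1/2) m p (ww z)"
proof -
  define y where "y = z^m"
  define a where "a = poly p (ww z)"
  define b where "b = poly (pderiv p) (ww z)"
  define c where "c = poly (pderiv (pderiv p)) (ww z)"
  define q where "q = (4::real)^m"
  have "(2 * real m - 1) * z * F1 m p z - z^2 * F2 m p z = 
     q * ((2 * real m - 1) * z * (real m * (y * inverse z) * a + y * (b * ((1 - inverse z * inverse z) / 4)))
      - z^2 * (real m * (real m - 1) * (y * inverse z^2) * a
     + 2 * real m * (y * inverse z) * b * ((1 - inverse z * inverse z) / 4)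
     + y * c * ((1 - inverse z * inverse z) / 4)^2
     + y * b * (inverse z ^ 3 / 2)))"
    unfolding F1_def F2_def w1_def y_def a_def b_def c_def q_def by (simp add: algebra_simps)
  also have "\<dots> = q * y * ((z + inverse z + 2) / 4 * (1 - (z + inverse z + 2) / 4) * c + 
        ((-1/2 + 1) - (-1/2 + -1/2 + 2) * ((z + inverse z + 2) / 4)) * b + real m * (-1/2 + -1/2 + real m + 1) * a)"
    using assms by (simp add: field_simps power2_eq_square power3_eq_cube)
  also have "\<dots> = 4^m * z^m * jacobi_op (-1/2) (-1/2) m p (ww z)"
    unfolding jacobi_op_def ww_def y_def a_def b_def c_def q_def by simp
  finally show ?thesis .
qed

lemma key:
  assumes "degree p \<le> m" "(z::real) > 0"
  shows "poly (Mop m (Q m p)) z = 4^m * z^m * jacobi_op (-1/2) (-1/2) m p (ww z)"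
proof -
  have eq: "4^m * (y^m * poly p (ww y)) = poly (Q m p) y" if "y \<in> {0<..}" for y :: real
    using poly_Q_real[OF assms(1), of y] that by simp
  have D1: "poly (pderiv (Q m p)) y = F1 m p y" if "y \<in> {0<..}" for y :: real
  proof -
    have "(poly (Q m p) has_real_derivative F1 m p y) (at y)"
      by (rule has_field_derivative_transform_within_open[OF DERIV_F0 _ that eq]) (use that in auto)
    then show ?thesis using poly_DERIV DERIV_unique by blast
  qed
  then have "(poly (pderiv (Q m p)) has_real_derivative F2 m p z) (at z)"
    using assms(2) by (intro has_field_derivative_transform_within_open[OF DERIV_F1, of z "{0<..}"]) auto
  then have d2: "poly (pderiv (pderiv (Q m p))) z = F2 m p z" using poly_DERIV DERIV_unique by blast
  have d1: "poly (pderiv (Q m p)) z = F1 m p z" using D1 assms(2) by simp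
  show ?thesis unfolding poly_Mop d1 d2 using key_alg[of z m p] assms(2) by simp
qed


lemma scalar_ode:
  fixes g :: "real \<Rightarrow> real"
  assumes "\<And>t. t \<ge> 0 \<Longrightarrow> (g has_real_derivative - l * g t) (at t within {0..})" "t \<ge> 0"
  shows "g t = g 0 * exp (- l * t)"
proof -
  have "\<exists>c. \<forall>x\<in>{0..}. g x * exp (l * x) = c"
  proof (rule has_field_derivative_zero_constant)
    fix x :: real assume "x \<in> {0..}"
    then have "((\<lambda>x. g x * exp (l * x)) has_real_derivative
        (- l * g x) * exp (l * x) + exp (l * x) * (l * 1) * g x) (at x within {0..})"
      by (intro DERIV_mult assms(1) DERIV_chain2[OF DERIV_exp] DERIV_cmult DERIV_ident) auto
    then show "((\<lambda>x. g x * exp (l * x)) has_real_derivative 0) (at x within {0..})"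
      by (simp add: algebra_simps)
  qed auto
  then obtain c where "\<forall>x\<in>{0..}. g x * exp (l * x) = c" by blast
  then have "g t * exp (l * t) = g 0 * exp (l * 0)" using assms(2) by (metis atLeast_iff order_refl)
  then have "g t * exp (l * t) * exp (- l * t) = g 0 * exp (- l * t)" by simp
  then show ?thesis by (simp add: mult.assoc flip: exp_add)
qed

lemma Q_init: "Q m ([:-1,1:]^m) = [:-1,1:]^(2*m)"
proof (rule poly_eqI_degree[where A = "(\<lambda>j. real j + 1) ` {0..2*m}"])
  have cA: "card ((\<lambda>j. real j + 1) ` {0..2*m}) = Suc (2*m)"
    by (subst card_image) (auto simp: inj_on_def)
  show "degree (Q m ([:-1,1:]^m)) < card ((\<lambda>j. real j + 1) ` {0..2*m})"
    using degree_Q[of m] cA by (metis le_imp_less_Suc)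
  show "degree ([:-1,1::real:]^(2*m)) < card ((\<lambda>j. real j + 1) ` {0..2*m})"
    using cA degree_linear_power[of "-1::real" "2*m"] by simp
  fix y assume "y \<in> (\<lambda>j. real j + 1) ` {0..2*m}"
  then have y: "y > 0" by auto
  have "poly (Q m ([:-1,1:]^m)) y = 4^m * y^m * (ww y - 1)^m"
    using poly_Q_real[of "[:-1,1:]^m" m y] y by (simp add: degree_linear_power)
  also have "\<dots> = (4 * y * (ww y - 1))^m" by (simp add: power_mult_distrib)
  also have "4 * y * (ww y - 1) = (y - 1)^2" using y by (simp add: ww_def field_simps power2_eq_square)
  finally show "poly (Q m ([:-1,1:]^m)) y = poly ([:-1,1:]^(2*m)) y" by (simp add: power_mult)
qed

lemma main_coeffs:
  assumes H: "is_jacobi_char_poly (-1/2) (-1/2) m ([:-1, 1:] ^ m) chi" and t: "t \<ge> 0"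
  shows "coeff (Q m (chi t)) a = coeff ([:-1,1:]^(2*m)) a * exp (- (real a * (2 * real m - real a)) * t)"
proof -
  from H have c0: "chi 0 = [:-1,1:]^m" and deg: "\<And>t. t \<ge> 0 \<Longrightarrow> degree (chi t) \<le> m"
    and dv: "\<And>t x. t \<ge> 0 \<Longrightarrow> ((\<lambda>\<tau>. poly (chi \<tau>) x) has_real_derivative
                      - jacobi_op (-1/2) (-1/2) m (chi t) x) (at t within {0..})"
    unfolding is_jacobi_char_poly_def by auto
  have dG: "((\<lambda>\<tau>. poly (Q m (chi \<tau>)) y) has_real_derivative - poly (Mop m (Q m (chi s))) y) (at s within {0..})"
    if s: "s \<ge> 0" and y: "y > 0" for s y :: real
  proof -
    have "((\<lambda>\<tau>. 4^m * y^m * poly (chi \<tau>) (ww y)) has_real_derivative 4^m * y^m * (- jacobi_op (-1/2) (-1/2) m (chi s) (ww y))) (at s within {0..})"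
      by (intro DERIV_cmult dv s)
    then have "((\<lambda>\<tau>. 4^m * y^m * poly (chi \<tau>) (ww y)) has_real_derivative - poly (Mop m (Q m (chi s))) y) (at s within {0..})"
      using key[OF deg[OF s] y] by simp
    then show ?thesis
      by (rule has_field_derivative_transform_within[where d = 1]) (use s y deg poly_Q_real in auto)
  qed
  define g where "g \<tau> = coeff (Q m (chi \<tau>)) a" for \<tau>
  define l where "l = real a * (2 * real m - real a)"
  have "g s' = g 0 * exp (- l * s')" if "s' \<ge> 0" for s'
  proof (rule scalar_ode[OF _ that])
    fix s :: real assume s: "s \<ge> 0"
    have eqg: "g \<tau> = (\<Sum>j\<in>{0..2*m}. poly (Q m (chi \<tau>)) (real j + 1) * coeff (lag (2*m) j) a)" for \<tau>
      unfolding g_def by (rule coeff_interp[OF degree_Q])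
    have "((\<lambda>\<tau>. \<Sum>j\<in>{0..2*m}. poly (Q m (chi \<tau>)) (real j + 1) * coeff (lag (2*m) j) a) has_real_derivative
        (\<Sum>j\<in>{0..2*m}. - poly (Mop m (Q m (chi s))) (real j + 1) * coeff (lag (2*m) j) a)) (at s within {0..})"
      by (intro DERIV_sum DERIV_cmult_right dG s) auto
    also have "(\<Sum>j\<in>{0..2*m}. - poly (Mop m (Q m (chi s))) (real j + 1) * coeff (lag (2*m) j) a)
        = - coeff (Mop m (Q m (chi s))) a"
      by (subst coeff_interp[OF order.trans[OF degree_Mop degree_Q]]) (simp add: sum_negf)
    also have "\<dots> = - l * g s" by (simp add: coeff_Mop l_def g_def)
    finally have X: "((\<lambda>\<tau>. \<Sum>j\<in>{0..2*m}. poly (Q m (chi \<tau>)) (real j + 1) * coeff (lag (2*m) j) a) has_real_derivative - l * g s) (at s within {0..})" .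
    have gfun: "g = (\<lambda>\<tau>. \<Sum>j\<in>{0..2*m}. poly (Q m (chi \<tau>)) (real j + 1) * coeff (lag (2*m) j) a)"
      by (rule ext) (rule eqg)
    from X show "(g has_real_derivative - l * g s) (at s within {0..})" by (simp only: gfun[symmetric])
  qed
  then show ?thesis using t c0 Q_init by (simp add: g_def l_def)
qed


theorem mainTheorem6:
  fixes m :: nat and chi :: "real \<Rightarrow> real poly" and t :: real and z :: complex
  assumes "is_jacobi_char_poly (-1/2) (-1/2) m ([:-1, 1:] ^ m) chi"
    and "t \<ge> 0" and "z \<noteq> 0"
  shows "hermite_unitary (2 * m) z (2 * t)
         = 4 ^ m * z ^ m * poly (map_poly complex_of_real (chi t)) ((z + inverse z + 2) / 4)"
proof -
  have deg: "degree (chi t) \<le> m" using assms(1,2) unfolding is_jacobi_char_poly_def by auto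
  have "4 ^ m * z ^ m * poly (map_poly complex_of_real (chi t)) ((z + inverse z + 2) / 4)
      = poly (map_poly of_real (Q m (chi t))) z"
    using poly_Q_gen[OF deg assms(3)] by (simp add: ww_def)
  also have "\<dots> = (\<Sum>a\<le>2*m. of_real (coeff (Q m (chi t)) a) * z ^ a)"
    by (rule poly_mpr_sum[OF degree_Q])
  also have "\<dots> = (\<Sum>a\<le>2*m. of_real (real (2*m choose a) * (-1)^(2*m-a) * exp (- (real a * (2 * real m - real a)) * t)) * z ^ a)"
    by (intro sum.cong refl) (simp add: main_coeffs[OF assms(1,2)] coeff_linear_poly_power)
  also have "\<dots> = hermite_unitary (2 * m) z (2 * t)"
    unfolding hermite_unitary_def
  proof (subst sum.atLeastAtMost_rev, subst atLeast0AtMost, intro sum.cong refl)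
    fix a assume a: "a \<in> {..2*m}"
    then have a': "a \<le> 2*m" by simp
    have e: "real ((2 * m + 0 - a) * (2 * m - (2 * m + 0 - a))) = real a * (2 * real m - real a)"
      using a' by (simp add: of_nat_diff)
    have c: "2 * m choose (2 * m + 0 - a) = 2 * m choose a"
      using a' by (simp flip: binomial_symmetric)
    show "complex_of_real (real (2 * m choose a) * (- 1) ^ (2 * m - a) * exp (- (real a * (2 * real m - real a)) * t)) * z ^ a =
      z ^ (2 * m - (2 * m + 0 - a)) * (- 1) ^ (2 * m + 0 - a) * of_nat (2 * m choose (2 * m + 0 - a)) *
      complex_of_real (exp (- (2 * t) * real ((2 * m + 0 - a) * (2 * m - (2 * m + 0 - a))) / 2))"
      using a' unfolding e c by (simp add: mult_ac)
  qed
  finally show ?thesis by simp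
qed

end
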